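(* Consider a stochastic multi-armed bandit with $K\ge 2$ arms and horizon $n$. Arm $i$ has an unknown reward distribution $\nu_i$ supported on $[0,1]$, with variance $\sigma_i^2$; rewards are independent across arms and time. Assume the arm with maximal variance is unique, and let $\sigma_*^2=\max_i\sigma_i^2$ and $\delta_i=\sigma_*^2-\sigma_i^2$. Let $s_i(t)$ be the number of pulls of arm $i$ up to and including time $t$, and let $\bar V_i(t)=\frac{1}{s_i(t)}\sum_{q=1}^{s_i(t)}\big(X_{i,q}-\bar\mu_i(t)\big)^2$ be the (biased) empirical variance of the $s_i(t)$ rewards $X_{i,1},\dots,X_{i,s_i(t)}$ observed from arm $i$, where $\bar\mu_i(t)$ is their empirical mean. The algorithm UCB-VV first pulls the arms once each in round-robin order ($t=1,\dots,K$), and thereafter at each time $t$ pulls an arm maximizing the index $$B_i(t-1)=\bar V_i(t-1)+\sqrt{\frac{2\log (t-1)}{s_i(t-1)}}.$$ Define the regret $R_{\mathrm{VV}}(n)=\sum_{i=1}^K \mathbb{E}[s_i(n)]\,\delta_i$. Then $$R_{\mathrm{VV}}(n)\le 8\sum_{i:\sigma_i^2<\sigma_*^2}\frac{\log n}{\delta_i}+\Big(1+\frac{\pi^2}{3}\Big)\sum_{i:\sigma_i^2<\sigma_*^2}\delta_i .$$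
   Context: The regret counts, weighted by the variance gap $\delta_i$, the expected number of pulls of arms that do not have the maximal variance. *)

theory Defs
  imports "HOL-Probability.Probability"
begin

text \<open>Arms are 0,...,K-1. The reward table x i q is the (q+1)-th reward observed
from arm i (q = 0,1,...).\<close>

definition emp_mean :: "(nat \<Rightarrow> nat \<Rightarrow> real) \<Rightarrow> nat \<Rightarrow> nat \<Rightarrow> real" where
  "emp_mean x i m = (\<Sum>q<m. x i q) / real m"

definition emp_var :: "(nat \<Rightarrow> nat \<Rightarrow> real) \<Rightarrow> nat \<Rightarrow> nat \<Rightarrow> real" where
  "emp_var x i m = (\<Sum>q<m. (x i q - emp_mean x i m)^2) / real m"

text \<open>UCB-VV index of arm i at time t+1, computed from the counts c after t pulls:
  B_i(t) = V_i(t) + sqrt(2 log t / s_i(t)).\<close>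
definition vv_index :: "(nat \<Rightarrow> nat \<Rightarrow> real) \<Rightarrow> (nat \<Rightarrow> nat) \<Rightarrow> nat \<Rightarrow> nat \<Rightarrow> real" where
  "vv_index x c t i = emp_var x i (c i) + sqrt (2 * ln (real t) / real (c i))"

text \<open>The first K pulls are round robin
(time t+1 pulls arm t for t < K); afterwards the arm pulled at time t+1 is
tb (t+1) S where S is the set of arms maximising the index B_i(t), and tb is an
arbitrary tie-breaking rule (required to choose inside S).\<close>
fun vv_counts :: "nat \<Rightarrow> (nat \<Rightarrow> nat set \<Rightarrow> nat) \<Rightarrow> (nat \<Rightarrow> nat \<Rightarrow> real) \<Rightarrow> nat \<Rightarrow> nat \<Rightarrow> nat" where
  "vv_counts K tb x 0 = (\<lambda>i. 0)"
| "vv_counts K tb x (Suc t) =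
     (let c = vv_counts K tb x t;
          a = (if t < K then t
               else tb (Suc t) {i. i < K \<and> (\<forall>j<K. vv_index x c t j \<le> vv_index x c t i)})
      in c(a := c a + 1))"

definition dist_var :: "real measure \<Rightarrow> real" where
  "dist_var \<nu> = (\<integral>y. (y - (\<integral>z. z \<partial>\<nu>))^2 \<partial>\<nu>)"

end

theory Submission
  imports Defs
begin

definition arm :: "nat \<Rightarrow> (nat \<Rightarrow> nat set \<Rightarrow> nat) \<Rightarrow> (nat \<Rightarrow> nat \<Rightarrow> real) \<Rightarrow> nat \<Rightarrow> nat" where
  "arm K tb x t = (if t < K then t
     else tb (Suc t) {i. i < K \<and> (\<forall>j<K. vv_index x (vv_counts K tb x t) t j \<le> vv_index x (vv_counts K tb x t) t i)})"

lemma counts_Suc: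
  "vv_counts K tb x (Suc t) i = vv_counts K tb x t i + (if arm K tb x t = i then 1 else 0)"
  by (simp add: Let_def arm_def)

lemma counts_le: "vv_counts K tb x t i \<le> t"
  by (induction t) (auto simp del: vv_counts.simps(2) simp: counts_Suc)

lemma counts_mono: "t \<le> t' \<Longrightarrow> vv_counts K tb x t i \<le> vv_counts K tb x t' i"
proof (induction t' rule: dec_induct)
  case (step n) then show ?case by (simp del: vv_counts.simps(2) add: counts_Suc)
qed simp

lemma counts_init: "t \<le> K \<Longrightarrow> vv_counts K tb x t i = (if i < t then 1 else 0)"
  by (induction t) (auto simp del: vv_counts.simps(2) simp: counts_Suc arm_def)

lemma counts_pos: "K \<le> t \<Longrightarrow> j < K \<Longrightarrow> 1 \<le> vv_counts K tb x t j"
proof -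
  assume a: "K \<le> t" "j < K"
  have "vv_counts K tb x K j = 1" using a by (simp add: counts_init)
  with counts_mono[OF a(1), where K=K and tb=tb and x=x and i=j] show ?thesis by simp
qed

lemma arm_max:
  assumes tb: "\<And>t S. S \<noteq> {} \<Longrightarrow> tb t S \<in> S" and K: "K \<le> t" "0 < K"
  shows "arm K tb x t < K \<and> (\<forall>j<K. vv_index x (vv_counts K tb x t) t j
            \<le> vv_index x (vv_counts K tb x t) t (arm K tb x t))"
proof -
  let ?f = "\<lambda>j. vv_index x (vv_counts K tb x t) t j"
  let ?S = "{i. i < K \<and> (\<forall>j<K. ?f j \<le> ?f i)}"
  have "?S \<noteq> {}"
  proof -
    have ne: "?f ` {..<K} \<noteq> {}" using K by auto
    obtain i where i: "i < K" "?f i = Max (?f ` {..<K})"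
      using Max_in[OF _ ne] by auto
    have "\<forall>j<K. ?f j \<le> ?f i" using i by auto
    with i show ?thesis by blast
  qed
  from tb[OF this, of "Suc t"] have "tb (Suc t) ?S \<in> ?S" .
  then show ?thesis using K by (simp add: arm_def)
qed

lemma arm_lt:
  assumes tb: "\<And>t S. S \<noteq> {} \<Longrightarrow> tb t S \<in> S" and K: "0 < K"
  shows "arm K tb x t < K"
  using arm_max[where tb=tb and t=t and x=x, OF tb _ K] by (cases "t < K") (auto simp: arm_def)

lemma count_bound:
  assumes l: "1 \<le> l"
  shows "vv_counts K tb x n i \<le> l + card {t\<in>{K..<n}. arm K tb x t = i \<and> l \<le> vv_counts K tb x t i}"
proof (induction n)
  case 0 then show ?case by simp
next
  case (Suc n)
  let ?c = "vv_counts K tb x"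
  let ?A = "\<lambda>n. {t\<in>{K..<n}. arm K tb x t = i \<and> l \<le> ?c t i}"
  have fin: "finite (?A n)" by simp
  show ?case
  proof (cases "n < K")
    case True
    then have "?c (Suc n) i \<le> 1" by (simp add: counts_init)
    then show ?thesis using l by linarith
  next
    case False
    show ?thesis
    proof (cases "arm K tb x n = i \<and> l \<le> ?c n i")
      case True
      then have "?A (Suc n) = insert n (?A n)" using False by auto
      then have "card (?A (Suc n)) = Suc (card (?A n))" using fin by simp
      then show ?thesis using Suc.IH True by (simp del: vv_counts.simps(2) add: counts_Suc)
    next
      case F: False
      have sub: "?A n \<subseteq> ?A (Suc n)" by (auto simp del: vv_counts.simps)
      have "card (?A n) \<le> card (?A (Suc n))" using sub by (intro card_mono) auto
      moreover have "?c (Suc n) i \<le> max (?c n i) l" using F by (auto simp del: vv_counts.simps(2) simp: counts_Suc)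
      ultimately show ?thesis using Suc.IH by linarith
    qed
  qed
qed

lemma emp_var_decomp:
  assumes "0 < s"
  shows "emp_var x i s = (\<Sum>q<s. (x i q - m)^2) / real s - (emp_mean x i s - m)^2"
proof -
  let ?a = "emp_mean x i s"
  have sa: "(\<Sum>q<s. x i q) = real s * ?a" using assms by (simp add: emp_mean_def)
  have "(\<Sum>q<s. (x i q - m)^2) = (\<Sum>q<s. (x i q - ?a)^2 + 2 * (?a - m) * x i q + (m^2 - ?a^2))"
    by (intro sum.cong) (auto simp: power2_eq_square algebra_simps)
  also have "\<dots> = (\<Sum>q<s. (x i q - ?a)^2) + 2 * (?a - m) * (\<Sum>q<s. x i q) + real s * (m^2 - ?a^2)"
    by (simp add: sum.distrib sum_distrib_left)
  also have "\<dots> = (\<Sum>q<s. (x i q - ?a)^2) + real s * (?a - m)^2"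
    by (simp add: sa power2_eq_square algebra_simps)
  finally show ?thesis using assms by (simp add: emp_var_def field_simps)
qed

lemma emp_var_nonneg: "0 \<le> emp_var x i s"
  unfolding emp_var_def by (intro divide_nonneg_nonneg sum_nonneg) auto

lemma key:
  fixes v :: "nat \<Rightarrow> real" and l :: nat
  assumes tb: "\<And>t S. S \<noteq> {} \<Longrightarrow> tb t S \<in> S" and K: "0 < K" "K \<le> t" "t < n"
    and ai: "arm K tb x t = i" and ist: "ist < K"
    and l: "8 * ln (real n) / (v ist - v i)^2 \<le> real l" "l \<le> vv_counts K tb x t i"
    and d: "v i < v ist"
  shows "(\<exists>s\<in>{1..t}. v i + sqrt (2 * ln (real t) / real s) \<le> emp_var x i s)
       \<or> (\<exists>s\<in>{1..t}. emp_var x ist s + sqrt (2 * ln (real t) / real s) \<le> v ist)"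
proof (rule ccontr)
  assume na: "\<not> ?thesis"
  let ?c = "vv_counts K tb x t"
  define si where "si = ?c i"
  define ss where "ss = ?c ist"
  define \<delta> where "\<delta> = v ist - v i"
  have \<delta>: "0 < \<delta>" using d by (simp add: \<delta>_def)
  have am: "arm K tb x t < K \<and> (\<forall>j<K. vv_index x ?c t j \<le> vv_index x ?c t (arm K tb x t))"
    using arm_max[where tb=tb and t=t and x=x, OF tb K(2) K(1)] .
  then have i: "i < K" and le: "vv_index x ?c t ist \<le> vv_index x ?c t i" using ai ist by auto
  have si: "1 \<le> si" "si \<le> t" unfolding si_def using counts_pos[OF K(2) i] counts_le by auto
  have ss: "1 \<le> ss" "ss \<le> t" unfolding ss_def using counts_pos[OF K(2) ist] counts_le by auto
  have t1: "1 \<le> real t" using K by simp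
  have lnt: "0 \<le> ln (real t)" "ln (real t) \<le> ln (real n)" using t1 K by auto
  have "2 * ln (real t) / real si \<le> 2 * ln (real n) / real si"
    using lnt si by (intro divide_right_mono) auto
  also have "\<dots> \<le> 2 * ln (real n) / (8 * ln (real n) / \<delta>^2)"
  proof (cases "ln (real n) = 0")
    case True then show ?thesis by simp
  next
    case False
    then have "0 < ln (real n)" using lnt by auto
    moreover have "8 * ln (real n) / \<delta>^2 \<le> real si" using l si_def \<delta>_def by simp
    ultimately show ?thesis using \<delta> si by (intro divide_left_mono) auto
  qed
  also have "\<dots> \<le> (\<delta>/2)^2"
    using \<delta> by (cases "ln (real n) = 0") (simp_all add: field_simps power2_eq_square)
  finally have "sqrt (2 * ln (real t) / real si) \<le> sqrt ((\<delta>/2)^2)"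
    by (rule real_sqrt_le_mono)
  then have "sqrt (2 * ln (real t) / real si) \<le> \<delta> / 2"
    using \<delta> by simp
  moreover have "emp_var x i si < v i + sqrt (2 * ln (real t) / real si)"
    using na si by force
  moreover have "v ist < emp_var x ist ss + sqrt (2 * ln (real t) / real ss)"
    using na ss by force
  ultimately show False using le unfolding vv_index_def si_def ss_def \<delta>_def by argo
qed

lemma (in prob_space) hoeff:
  fixes Y :: "'b \<Rightarrow> 'a \<Rightarrow> real"
  assumes ind: "indep_vars (\<lambda>_. borel) Y I" and fin: "finite I" and ne: "I \<noteq> {}"
    and ae: "\<And>p. p \<in> I \<Longrightarrow> AE \<omega> in M. Y p \<omega> \<in> {0..1}"
    and ex: "\<And>p. p \<in> I \<Longrightarrow> expectation (Y p) = m" and e: "0 \<le> \<epsilon>"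
  shows "prob {\<omega>\<in>space M. real (card I) * m + \<epsilon> \<le> (\<Sum>p\<in>I. Y p \<omega>)} \<le> exp (-2 * \<epsilon>^2 / real (card I))"
    and "prob {\<omega>\<in>space M. (\<Sum>p\<in>I. Y p \<omega>) \<le> real (card I) * m - \<epsilon>} \<le> exp (-2 * \<epsilon>^2 / real (card I))"
    and "prob {\<omega>\<in>space M. \<epsilon> \<le> \<bar>(\<Sum>p\<in>I. Y p \<omega>) - real (card I) * m\<bar>} \<le> 2 * exp (-2 * \<epsilon>^2 / real (card I))"
proof -
  interpret H: Hoeffding_ineq M I Y "\<lambda>_. 0" "\<lambda>_. 1" "real (card I) * m"
  proof unfold_locales
    show "real (card I) * m \<equiv> \<Sum>i\<in>I. expectation (Y i)" using ex by simp
  qed (use fin ind ae in auto)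
  have pos: "(\<Sum>i\<in>I. ((\<lambda>_. 1::real) i - (\<lambda>_. 0) i)\<^sup>2) > 0" using fin ne by (simp add: card_gt_0_iff)
  have eq: "(\<Sum>i\<in>I. ((\<lambda>_. 1::real) i - (\<lambda>_. 0) i)\<^sup>2) = real (card I)" by simp
  show "prob {\<omega>\<in>space M. real (card I) * m + \<epsilon> \<le> (\<Sum>p\<in>I. Y p \<omega>)} \<le> exp (-2 * \<epsilon>^2 / real (card I))"
    using H.Hoeffding_ineq_ge[OF e pos] unfolding eq .
  show "prob {\<omega>\<in>space M. (\<Sum>p\<in>I. Y p \<omega>) \<le> real (card I) * m - \<epsilon>} \<le> exp (-2 * \<epsilon>^2 / real (card I))"
    using H.Hoeffding_ineq_le[OF e pos] unfolding eq .
  show "prob {\<omega>\<in>space M. \<epsilon> \<le> \<bar>(\<Sum>p\<in>I. Y p \<omega>) - real (card I) * m\<bar>} \<le> 2 * exp (-2 * \<epsilon>^2 / real (card I))"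
    using H.Hoeffding_ineq_abs_ge[OF e pos] unfolding eq .
qed

definition nmean :: "real measure \<Rightarrow> real" where "nmean \<nu> = (\<integral>z. z \<partial>\<nu>)"

locale bandit = prob_space M for M :: "'a measure" +
  fixes K :: nat and \<nu> :: "nat \<Rightarrow> real measure" and X :: "nat \<Rightarrow> nat \<Rightarrow> 'a \<Rightarrow> real"
  assumes nu_prob: "\<And>i. i < K \<Longrightarrow> prob_space (\<nu> i)"
    and nu_sets: "\<And>i. i < K \<Longrightarrow> sets (\<nu> i) = sets borel"
    and nu_supp: "\<And>i. i < K \<Longrightarrow> measure (\<nu> i) {0..1} = 1"
    and indep: "indep_vars (\<lambda>_. borel) (\<lambda>(i, q). X i q) ({..<K} \<times> UNIV)"
    and distrX: "\<And>i q. i < K \<Longrightarrow> distr M borel (X i q) = \<nu> i"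
begin

lemma Xmeas: "i < K \<Longrightarrow> X i q \<in> borel_measurable M"
  using indep unfolding indep_vars_def by (auto dest!: bspec[where x="(i,q)"])

lemma XAE: "i < K \<Longrightarrow> AE \<omega> in M. X i q \<omega> \<in> {0..1}"
proof -
  assume i: "i < K"
  have "AE x in \<nu> i. x \<in> {0..1}"
    using prob_space.AE_prob_1[OF nu_prob[OF i] nu_supp[OF i]] .
  then have "AE x in distr M borel (X i q). x \<in> {0..1}" unfolding distrX[OF i] .
  then show ?thesis using Xmeas[OF i] by (subst (asm) AE_distr_iff) auto
qed

lemma Xint: "i < K \<Longrightarrow> (g :: real \<Rightarrow> real) \<in> borel_measurable borel \<Longrightarrow>
   integral\<^sup>L (\<nu> i) g = expectation (\<lambda>\<omega>. g (X i q \<omega>))"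
proof -
  assume i: "i < K" and g: "g \<in> borel_measurable borel"
  have "integral\<^sup>L (distr M borel (X i q)) g = expectation (\<lambda>\<omega>. g (X i q \<omega>))"
    by (rule integral_distr[OF Xmeas[OF i] g])
  then show ?thesis unfolding distrX[OF i] .
qed

lemma Xintegrable: fixes g :: "real \<Rightarrow> real" and B :: real
  assumes i: "i < K" and g: "g \<in> borel_measurable borel" and b: "\<And>y. y \<in> {0..1} \<Longrightarrow> \<bar>g y\<bar> \<le> B"
  shows "integrable M (\<lambda>\<omega>. g (X i q \<omega>))"
proof (rule integrable_const_bound[where B=B])
  show "AE \<omega> in M. norm (g (X i q \<omega>)) \<le> B"
    using XAE[OF i, of q] by eventually_elim (use b in auto)
  show "(\<lambda>\<omega>. g (X i q \<omega>)) \<in> borel_measurable M"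
    using measurable_compose[OF Xmeas[OF i] g] by (simp add: comp_def)
qed

lemma EX: "i < K \<Longrightarrow> expectation (X i q) = nmean (\<nu> i)"
  using Xint[of i "\<lambda>z. z" q] by (simp add: nmean_def)

lemma Evar: "i < K \<Longrightarrow> expectation (\<lambda>\<omega>. (X i q \<omega> - nmean (\<nu> i))^2) = dist_var (\<nu> i)"
  using Xint[of i "\<lambda>z. (z - nmean (\<nu> i))^2" q] by (simp add: dist_var_def nmean_def)

lemma mean_bounds: "i < K \<Longrightarrow> 0 \<le> nmean (\<nu> i) \<and> nmean (\<nu> i) \<le> 1"
proof -
  assume i: "i < K"
  have "0 \<le> expectation (X i 0)"
    using XAE[OF i, of 0] by (intro integral_nonneg_AE) (auto elim!: eventually_mono)
  moreover have "expectation (X i 0) \<le> expectation (\<lambda>_. 1::real)"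
    using XAE[OF i, of 0] Xintegrable[OF i, of "\<lambda>z. z" 1 0]
    by (intro integral_mono_AE) (auto elim!: eventually_mono)
  ultimately show ?thesis using EX[OF i, of 0] by (simp add: prob_space)
qed

lemma var_bounds: "i < K \<Longrightarrow> 0 \<le> dist_var (\<nu> i) \<and> dist_var (\<nu> i) \<le> 1/4"
proof -
  assume i: "i < K"
  define \<mu> where "\<mu> = nmean (\<nu> i)"
  have ae: "AE \<omega> in M. X i 0 \<omega> \<in> {0..1}" using XAE[OF i] .
  have bnd: "\<bar>y - 2 * \<mu> * y + \<mu>^2\<bar> \<le> 4" if "0 \<le> y" "y \<le> 1" for y
  proof -
    have m: "0 \<le> \<mu>" "\<mu> \<le> 1" using mean_bounds[OF i] by (auto simp: \<mu>_def)
    have "0 \<le> \<mu> * y" "\<mu> * y \<le> 1" "0 \<le> \<mu>^2" "\<mu>^2 \<le> 1" using m that by (auto intro: mult_le_one simp: abs_square_le_1)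
    moreover have "2 * \<mu> * y = 2 * (\<mu> * y)" by simp
    ultimately show ?thesis using that unfolding abs_le_iff by linarith
  qed
  have "0 \<le> expectation (\<lambda>\<omega>. (X i 0 \<omega> - \<mu>)^2)" by simp
  moreover have "expectation (\<lambda>\<omega>. (X i 0 \<omega> - \<mu>)^2) \<le> expectation (\<lambda>\<omega>. X i 0 \<omega> - 2 * \<mu> * X i 0 \<omega> + \<mu>^2)"
  proof (rule integral_mono_AE)
    show "integrable M (\<lambda>\<omega>. (X i 0 \<omega> - \<mu>)^2)"
      using mean_bounds[OF i] by (intro Xintegrable[OF i, of _ 1]) (auto simp: \<mu>_def abs_square_le_1)
    show "integrable M (\<lambda>\<omega>. X i 0 \<omega> - 2 * \<mu> * X i 0 \<omega> + \<mu>^2)"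
      using mean_bounds[OF i] by (intro Xintegrable[OF i, of _ 4]) (auto intro!: bnd)
    show "AE \<omega> in M. (X i 0 \<omega> - \<mu>)^2 \<le> X i 0 \<omega> - 2 * \<mu> * X i 0 \<omega> + \<mu>^2"
      using ae by eventually_elim (auto simp: power2_eq_square algebra_simps intro: mult_left_le_one_le)
  qed
  moreover have "expectation (\<lambda>\<omega>. X i 0 \<omega> - 2 * \<mu> * X i 0 \<omega> + \<mu>^2) = \<mu> - 2 * \<mu> * \<mu> + \<mu>^2"
  proof -
    have I: "integrable M (X i 0)" using Xintegrable[OF i, of "\<lambda>z. z" 1 0] by simp
    have "expectation (\<lambda>\<omega>. X i 0 \<omega> - 2 * \<mu> * X i 0 \<omega> + \<mu>^2)
        = expectation (X i 0) - 2 * \<mu> * expectation (X i 0) + \<mu>^2"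
      using I by (simp add: integral_add integral_diff prob_space)
    then show ?thesis using EX[OF i, of 0] by (simp add: \<mu>_def)
  qed
  moreover have "\<mu> - 2 * \<mu> * \<mu> + \<mu>^2 \<le> 1/4"
  proof -
    have "0 \<le> (\<mu> - 1/2)^2" by simp
    then show ?thesis by (simp add: power2_eq_square algebra_simps)
  qed
  ultimately show ?thesis using Evar[OF i, of 0] \<mu>_def by simp
qed

end

lemma sum_single_times: "(\<Sum>p\<in>{i}\<times>A. f p) = (\<Sum>q\<in>A. f (i, q))"
proof -
  have "{i}\<times>A = (\<lambda>q. (i,q)) ` A" by auto
  moreover have "inj_on (\<lambda>q. (i,q)) A" by (auto simp: inj_on_def)
  ultimately show ?thesis by (simp add: sum.reindex)
qed

context bandit begin

lemma indep_arm:
  assumes i: "i < K" and g: "(g :: real \<Rightarrow> real) \<in> borel_measurable borel"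
  shows "indep_vars (\<lambda>_. borel) (\<lambda>p \<omega>. g (X (fst p) (snd p) \<omega>)) ({i}\<times>{..<s})"
proof -
  have "indep_vars (\<lambda>_. borel) (\<lambda>(i, q). X i q) ({i}\<times>{..<s})"
    by (rule indep_vars_subset[OF indep]) (use i in auto)
  then have "indep_vars (\<lambda>_. borel) (\<lambda>p \<omega>. g ((\<lambda>(i, q). X i q) p \<omega>)) ({i}\<times>{..<s})"
    by (rule indep_vars_compose2) (use g in auto)
  then show ?thesis by (simp add: case_prod_beta)
qed

lemma sum_meas: "i < K \<Longrightarrow> (g :: real \<Rightarrow> real) \<in> borel_measurable borel \<Longrightarrow>
  (\<lambda>\<omega>. \<Sum>q<s. g (X i q \<omega>)) \<in> borel_measurable M"
  by (intro borel_measurable_sum) (use measurable_compose[OF Xmeas] in \<open>auto simp: comp_def\<close>)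

lemma tail_up:
  assumes i: "i < K" and s: "0 < s" and c: "0 \<le> c"
  shows "prob {\<omega>\<in>space M. dist_var (\<nu> i) + c \<le> emp_var (\<lambda>j q. X j q \<omega>) i s} \<le> exp (-2 * real s * c^2)"
proof -
  define \<mu> where "\<mu> = nmean (\<nu> i)"
  define g where "g = (\<lambda>z::real. (z - \<mu>)^2)"
  have g: "g \<in> borel_measurable borel" unfolding g_def by measurable
  let ?I = "{i}\<times>{..<s}"
  let ?Y = "\<lambda>p \<omega>. g (X (fst p) (snd p) \<omega>)"
  have cardI: "card ?I = s" by (simp add: card_cartesian_product)
  have H: "prob {\<omega>\<in>space M. real (card ?I) * dist_var (\<nu> i) + real s * c \<le> (\<Sum>p\<in>?I. ?Y p \<omega>)}
      \<le> exp (-2 * (real s * c)^2 / real (card ?I))"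
  proof (rule hoeff(1)[OF indep_arm[OF i g]])
    show "AE \<omega> in M. ?Y p \<omega> \<in> {0..1}" if "p \<in> ?I" for p
    proof -
      have fp: "fst p = i" using that by auto
      have mb: "0 \<le> \<mu>" "\<mu> \<le> 1" using mean_bounds[OF i] by (auto simp: \<mu>_def)
      have gb: "g z \<in> {0..1}" if "z \<in> {0..1}" for z
      proof -
        have "\<bar>z - \<mu>\<bar> \<le> 1" using that mb by auto
        then show ?thesis by (simp add: g_def abs_square_le_1)
      qed
      show ?thesis using XAE[OF i, of "snd p"] by eventually_elim (use gb in \<open>simp add: fp\<close>)
    qed
    show "expectation (?Y p) = dist_var (\<nu> i)" if "p \<in> ?I" for p
      using Evar[OF i, of "snd p"] that by (auto simp: g_def \<mu>_def)
  qed (use s c in auto)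
  have sub: "{\<omega>\<in>space M. dist_var (\<nu> i) + c \<le> emp_var (\<lambda>j q. X j q \<omega>) i s}
     \<subseteq> {\<omega>\<in>space M. real (card ?I) * dist_var (\<nu> i) + real s * c \<le> (\<Sum>p\<in>?I. ?Y p \<omega>)}"
  proof safe
    fix \<omega> assume \<omega>: "\<omega> \<in> space M" and e: "dist_var (\<nu> i) + c \<le> emp_var (\<lambda>j q. X j q \<omega>) i s"
    have "emp_var (\<lambda>j q. X j q \<omega>) i s \<le> (\<Sum>q<s. (X i q \<omega> - \<mu>)^2) / real s"
      using emp_var_decomp[OF s, of "\<lambda>j q. X j q \<omega>" i \<mu>] by simp
    with e have "dist_var (\<nu> i) + c \<le> (\<Sum>q<s. (X i q \<omega> - \<mu>)^2) / real s" by linarith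
    then have "real s * (dist_var (\<nu> i) + c) \<le> (\<Sum>q<s. (X i q \<omega> - \<mu>)^2)"
      using s by (simp add: field_simps)
    then show "real (card ?I) * dist_var (\<nu> i) + real s * c \<le> (\<Sum>p\<in>?I. ?Y p \<omega>)"
      by (simp add: cardI sum_single_times g_def algebra_simps lessThan_def)
  qed
  have meas: "{\<omega>\<in>space M. real (card ?I) * dist_var (\<nu> i) + real s * c \<le> (\<Sum>p\<in>?I. ?Y p \<omega>)} \<in> sets M"
  proof -
    have [measurable]: "(\<lambda>\<omega>. \<Sum>p\<in>?I. ?Y p \<omega>) \<in> borel_measurable M"
      using sum_meas[OF i g, of s] by (simp add: sum_single_times lessThan_def)
    show ?thesis by measurable
  qed
  have "prob {\<omega>\<in>space M. dist_var (\<nu> i) + c \<le> emp_var (\<lambda>j q. X j q \<omega>) i s}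
      \<le> exp (-2 * (real s * c)^2 / real (card ?I))"
    using finite_measure_mono[OF sub meas] H by linarith
  also have "\<dots> = exp (-2 * real s * c^2)"
    using s by (simp add: cardI power2_eq_square)
  finally show ?thesis .
qed

lemma tail_down:
  assumes i: "i < K" and s: "0 < s" and c: "0 \<le> c"
  shows "prob {\<omega>\<in>space M. emp_var (\<lambda>j q. X j q \<omega>) i s + c \<le> dist_var (\<nu> i)}
     \<le> exp (-2 * real s * (13/16 * c)^2) + 2 * exp (-2 * real s * (3/16 * c))"
proof -
  define \<mu> where "\<mu> = nmean (\<nu> i)"
  define g where "g = (\<lambda>z::real. (z - \<mu>)^2)"
  have g: "g \<in> borel_measurable borel" unfolding g_def by measurable
  have idm: "(\<lambda>z::real. z) \<in> borel_measurable borel" by simp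
  let ?I = "{i}\<times>{..<s}"
  let ?Y = "\<lambda>p \<omega>. g (X (fst p) (snd p) \<omega>)"
  let ?Z = "\<lambda>p \<omega>. X (fst p) (snd p) \<omega>"
  have cardI: "card ?I = s" by (simp add: card_cartesian_product)
  have mb: "0 \<le> \<mu>" "\<mu> \<le> 1" using mean_bounds[OF i] by (auto simp: \<mu>_def)
  define E1 where "E1 = {\<omega>\<in>space M. (\<Sum>p\<in>?I. ?Y p \<omega>) \<le> real (card ?I) * dist_var (\<nu> i) - real s * (13/16 * c)}"
  define E2 where "E2 = {\<omega>\<in>space M. real s * sqrt (3/16 * c) \<le> \<bar>(\<Sum>p\<in>?I. ?Z p \<omega>) - real (card ?I) * \<mu>\<bar>}"
  have H1: "prob E1 \<le> exp (-2 * (real s * (13/16 * c))^2 / real (card ?I))"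
    unfolding E1_def
  proof (rule hoeff(2)[OF indep_arm[OF i g]])
    show "AE \<omega> in M. ?Y p \<omega> \<in> {0..1}" if "p \<in> ?I" for p
    proof -
      have fp: "fst p = i" using that by auto
      have gb: "g z \<in> {0..1}" if "z \<in> {0..1}" for z
      proof -
        have "\<bar>z - \<mu>\<bar> \<le> 1" using that mb by auto
        then show ?thesis by (simp add: g_def abs_square_le_1)
      qed
      show ?thesis using XAE[OF i, of "snd p"] by eventually_elim (use gb in \<open>simp add: fp\<close>)
    qed
    show "expectation (?Y p) = dist_var (\<nu> i)" if "p \<in> ?I" for p
      using Evar[OF i, of "snd p"] that by (auto simp: g_def \<mu>_def)
  qed (use s c in auto)
  have H2: "prob E2 \<le> 2 * exp (-2 * (real s * sqrt (3/16 * c))^2 / real (card ?I))"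
    unfolding E2_def
  proof (rule hoeff(3)[OF indep_arm[OF i idm]])
    show "AE \<omega> in M. ?Z p \<omega> \<in> {0..1}" if "p \<in> ?I" for p
      using XAE[OF i, of "snd p"] that by auto
    show "expectation (?Z p) = \<mu>" if "p \<in> ?I" for p
      using EX[OF i, of "snd p"] that by (auto simp: \<mu>_def)
  qed (use s c in auto)
  have [measurable]: "(\<lambda>\<omega>. \<Sum>p\<in>?I. ?Y p \<omega>) \<in> borel_measurable M"
    using sum_meas[OF i g, of s] by (simp add: sum_single_times lessThan_def)
  have [measurable]: "(\<lambda>\<omega>. \<Sum>p\<in>?I. ?Z p \<omega>) \<in> borel_measurable M"
    using sum_meas[OF i idm, of s] by (simp add: sum_single_times lessThan_def)
  have m1: "E1 \<in> sets M" unfolding E1_def by measurable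
  have m2: "E2 \<in> sets M" unfolding E2_def by measurable
  have sub: "{\<omega>\<in>space M. emp_var (\<lambda>j q. X j q \<omega>) i s + c \<le> dist_var (\<nu> i)} \<subseteq> E2 \<union> E1"
  proof safe
    fix \<omega> assume \<omega>: "\<omega> \<in> space M" and e: "emp_var (\<lambda>j q. X j q \<omega>) i s + c \<le> dist_var (\<nu> i)"
      and n1: "\<omega> \<notin> E1"
    define A where "A = (\<Sum>q<s. (X i q \<omega> - \<mu>)^2)"
    define S where "S = (\<Sum>q<s. X i q \<omega>)"
    have sA: "(\<Sum>p\<in>?I. ?Y p \<omega>) = A" by (simp add: A_def sum_single_times g_def lessThan_def)
    have sS: "(\<Sum>p\<in>?I. ?Z p \<omega>) = S" by (simp add: S_def sum_single_times lessThan_def)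
    have "\<not> A \<le> real s * dist_var (\<nu> i) - real s * (13/16 * c)"
      using n1 \<omega> sA cardI by (simp add: E1_def)
    then have A1: "dist_var (\<nu> i) - 13/16 * c < A / real s"
      using s by (simp add: field_simps)
    have dec: "emp_var (\<lambda>j q. X j q \<omega>) i s = A / real s - (S / real s - \<mu>)^2"
      using emp_var_decomp[OF s, of "\<lambda>j q. X j q \<omega>" i \<mu>] by (simp add: A_def S_def emp_mean_def)
    have "3/16 * c < (S / real s - \<mu>)^2" using A1 e dec by linarith
    then have "sqrt (3/16 * c) < sqrt ((S / real s - \<mu>)^2)" by (rule real_sqrt_less_mono)
    then have "sqrt (3/16 * c) < \<bar>S / real s - \<mu>\<bar>" by simp
    then have "real s * sqrt (3/16 * c) \<le> real s * \<bar>S / real s - \<mu>\<bar>"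
      using s by simp
    also have "real s * \<bar>S / real s - \<mu>\<bar> = \<bar>S - real s * \<mu>\<bar>"
      using s by (simp add: abs_mult[symmetric] field_simps)
    finally show "\<omega> \<in> E2" using \<omega> by (simp add: E2_def sS cardI)
  qed
  have "prob {\<omega>\<in>space M. emp_var (\<lambda>j q. X j q \<omega>) i s + c \<le> dist_var (\<nu> i)} \<le> prob (E1 \<union> E2)"
    using sub m1 m2 by (intro finite_measure_mono) (auto simp: Un_commute)
  also have "\<dots> \<le> prob E1 + prob E2" using m1 m2 by (rule measure_Un_le)
  also have "\<dots> \<le> exp (-2 * (real s * (13/16 * c))^2 / real (card ?I)) + 2 * exp (-2 * (real s * sqrt (3/16 * c))^2 / real (card ?I))"
    using H1 H2 by linarith
  also have "\<dots> = exp (-2 * real s * (13/16 * c)^2) + 2 * exp (-2 * real s * (3/16 * c))"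
    using s c by (simp add: cardI power2_eq_square power_mult_distrib)
  finally show ?thesis .
qed

end

definition Fb :: "nat \<Rightarrow> real" where
  "Fb t = 1 / (real t - 1) + 6 / sqrt (max 16 (real t - 1))"

lemma R1: "2 \<le> t \<Longrightarrow> 1 / (real t)^3 \<le> 1 / (real t - 1) - 1 / real t"
proof -
  assume t: "2 \<le> t"
  have "1 / (real t - 1) - 1 / real t = 1 / ((real t - 1) * real t)" using t by (simp add: field_simps)
  moreover have "(real t - 1) * real t \<le> (real t)^3"
  proof -
    have t1: "1 \<le> real t" using t by simp
    have "real t \<le> real t * real t" using t1 by (simp add: mult_le_cancel_left1)
    then have "real t * real t \<le> real t * (real t * real t)" using t1 by (intro mult_left_mono) auto
    then show ?thesis by (simp add: power3_eq_cube algebra_simps)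
  qed
  moreover have "0 < (real t - 1) * real t" using t by simp
  ultimately show ?thesis by (simp add: frac_le)
qed

lemma sqrt_diff: "(1::real) < x \<Longrightarrow> 1 / (2 * x * sqrt x) \<le> 1 / sqrt (x - 1) - 1 / sqrt x"
proof -
  assume x1: "1 < x"
  show ?thesis
  proof -
    define a where "a = sqrt (x - 1)"
    define b where "b = sqrt x"
    have a: "0 < a" "a^2 = x - 1" using x1 by (auto simp: a_def)
    have b: "0 < b" "b^2 = x" using x1 by (auto simp: b_def)
    have ab: "a \<le> b" unfolding a_def b_def by simp
    have "(b - a) * (a + b) = b^2 - a^2" by (simp add: power2_eq_square algebra_simps)
    also have "\<dots> = 1" using a b by simp
    finally have ba: "b - a = 1 / (a + b)" using a b by (simp add: field_simps)
    have "1 / a - 1 / b = (b - a) / (a * b)"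
      using a b by (simp add: field_simps)
    also have "\<dots> = 1 / (a * b * (a + b))" using a b by (simp add: ba)
    also have "1 / (2 * x * sqrt x) = 1 / (b * b * (b + b))" using b by (simp add: b_def[symmetric] power2_eq_square[symmetric] algebra_simps)
    moreover have "a * b * (a + b) \<le> b * b * (b + b)"
      using a b ab by (intro mult_mono) auto
    ultimately show ?thesis using a b unfolding a_def[symmetric] b_def[symmetric]
      by (metis frac_le le_numeral_extra(4) mult_pos_pos add_pos_pos zero_less_one_class.zero_le_one)
  qed
qed

lemma R2:
  assumes t: "17 \<le> t"
  shows "1 / (real t * sqrt (real t)) + 2 / (real t)^2 \<le> 6 * (1 / sqrt (real t - 1) - 1 / sqrt (real t))"
proof -
  have t1: "1 < real t" using t by simp
  have sq: "sqrt (real t) \<le> real t"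
  proof -
    have "1 \<le> sqrt (real t)" using t1 by simp
    then have "sqrt (real t) * 1 \<le> sqrt (real t) * sqrt (real t)" by (intro mult_left_mono) auto
    then show ?thesis using t1 by simp
  qed
  have sp: "0 < sqrt (real t)" using t1 by simp
  have "2 / (real t)^2 = 2 / (real t * real t)" by (simp add: power2_eq_square)
  also have "\<dots> \<le> 2 / (real t * sqrt (real t))"
    using sq sp t1 by (intro divide_left_mono mult_left_mono mult_pos_pos) auto
  finally have h: "2 / (real t)^2 \<le> 2 / (real t * sqrt (real t))" .
  have "1 / (real t * sqrt (real t)) + 2 / (real t * sqrt (real t)) = 3 / (real t * sqrt (real t))"
    by (simp add: add_divide_distrib[symmetric])
  with h have "1 / (real t * sqrt (real t)) + 2 / (real t)^2 \<le> 3 / (real t * sqrt (real t))"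
    by argo
  also have "\<dots> = 6 * (1 / (2 * real t * sqrt (real t)))" by simp
  also have "\<dots> \<le> 6 * (1 / sqrt (real t - 1) - 1 / sqrt (real t))"
    using sqrt_diff[OF t1] by (intro mult_left_mono) auto
  finally show ?thesis .
qed

lemma R_step:
  assumes t: "2 \<le> t"
  shows "1 / (real t)^3 + (if 17 \<le> t then 1 / (real t * sqrt (real t)) + 2 / (real t)^2 else 0)
     \<le> Fb t - Fb (Suc t)"
proof -
  have "Fb t - Fb (Suc t) = (1 / (real t - 1) - 1 / real t)
      + 6 * (1 / sqrt (max 16 (real t - 1)) - 1 / sqrt (max 16 (real t)))"
    by (simp add: Fb_def algebra_simps)
  moreover have "1 / (real t)^3 \<le> 1 / (real t - 1) - 1 / real t" using R1[OF t] .
  moreover have "(if 17 \<le> t then 1 / (real t * sqrt (real t)) + 2 / (real t)^2 else 0)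
      \<le> 6 * (1 / sqrt (max 16 (real t - 1)) - 1 / sqrt (max 16 (real t)))"
  proof (cases "17 \<le> t")
    case True
    then have "max 16 (real t - 1) = real t - 1" "max 16 (real t) = real t" by auto
    then show ?thesis using R2[OF True] True by simp
  next
    case False
    then have "max 16 (real t - 1) = 16" "max 16 (real t) = 16" by auto
    then show ?thesis using False by simp
  qed
  ultimately show ?thesis by linarith
qed

lemma R_tel:
  fixes f :: "nat \<Rightarrow> real"
  shows "m \<le> n \<Longrightarrow> (\<Sum>i=m..<n. f i - f (Suc i)) = f m - f n"
proof (induction n rule: dec_induct)
  case (step n) then show ?case by simp
qed simp

lemma Fb_bounds: "2 \<le> t \<Longrightarrow> 0 \<le> Fb t \<and> Fb t \<le> 5/2"
proof -
  assume t: "2 \<le> t"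
  have a: "0 \<le> 1 / (real t - 1)" "1 / (real t - 1) \<le> 1" using t by auto
  have s16: "sqrt 16 = (4::real)" by (rule real_sqrt_unique) auto
  have "sqrt 16 \<le> sqrt (max 16 (real t - 1))" by (rule real_sqrt_le_mono) simp
  then have "4 \<le> sqrt (max 16 (real t - 1))" unfolding s16 .
  then have b: "0 \<le> 6 / sqrt (max 16 (real t - 1))" "6 / sqrt (max 16 (real t - 1)) \<le> 6 / 4"
    using divide_left_mono[of 4 "sqrt (max 16 (real t - 1))" 6] by auto
  show ?thesis using a b by (simp add: Fb_def)
qed

lemma exp_ln_sq: "1 \<le> t \<Longrightarrow> 0 < s \<Longrightarrow> exp (-2 * real s * (sqrt (2 * ln (real t) / real s))^2) = 1 / (real t)^4"
proof -
  assume t: "1 \<le> t" and s: "0 < s"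
  have "0 \<le> 2 * ln (real t) / real s" using t by simp
  then have "exp (-2 * real s * (sqrt (2 * ln (real t) / real s))^2) = exp (- (4 * ln (real t)))"
    using s by simp
  also have "\<dots> = inverse (exp (ln (real t) * 4))" by (simp add: exp_minus mult.commute)
  also have "exp (ln (real t) * 4) = (exp (ln (real t)))^4"
    by (metis exp_of_nat_mult of_nat_numeral mult.commute)
  also have "inverse ((exp (ln (real t)))^4) = 1 / (real t)^4" using t by (simp add: inverse_eq_divide)
  finally show ?thesis .
qed

lemma ln2_gt: "1/2 < ln (2::real)"
  by (metis less_numeral_extra(1) ln_add1_gt one_add_one)

lemma opt_real:
  fixes t s :: nat and v c :: real
  assumes t: "2 \<le> t" and s: "1 \<le> s" "s \<le> t" and v: "v \<le> 1/4"
    and c: "c = sqrt (2 * ln (real t) / real s)" and cv: "c \<le> v"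
  shows "17 \<le> t \<and> exp (-2 * real s * (13/16 * c)^2) + 2 * exp (-2 * real s * (3/16 * c))
     \<le> 1 / (real t * (real t * sqrt (real t))) + 2 / (real t)^3"
proof -
  define L where "L = ln (real t)"
  have t0: "0 < real t" using t by simp
  have L2: "ln 2 \<le> L" unfolding L_def using t by simp
  have L0: "0 < L" using L2 ln2_gt by linarith
  have s0: "0 < real s" using s by simp
  have nn: "0 \<le> 2 * ln (real t) / real s"
    using L0 unfolding L_def by (intro divide_nonneg_nonneg) auto
  have c2: "c^2 = 2 * L / real s" unfolding c L_def using nn by (rule real_sqrt_pow2)
  have c0: "0 \<le> c" using nn by (simp add: c)
  have "c^2 \<le> (1/4)^2" using c0 cv v by (intro power_mono) auto
  then have "2 * L / real s \<le> 1/16" using c2 by (simp add: power2_eq_square)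
  then have sL: "32 * L \<le> real s" using s0 by (simp add: field_simps)
  have t17: "17 \<le> t"
  proof (rule ccontr)
    assume "\<not> 17 \<le> t"
    then have "real s \<le> 16" using s by simp
    moreover have "16 < 32 * L" using L2 ln2_gt by linarith
    ultimately show False using sL by linarith
  qed
  have tL: "exp L = real t" using t0 by (simp add: L_def)
  have sqt: "sqrt (real t) = exp (L/2)"
  proof (rule real_sqrt_unique)
    show "(exp (L/2))^2 = real t" by (simp add: power2_eq_square exp_add[symmetric] tL)
  qed simp
  have e1: "(13/16 * c)^2 = 169/256 * c^2" by (simp add: power2_eq_square)
  have e2: "real s * c^2 = 2 * L" using s0 by (simp add: c2)
  have "-2 * real s * (13/16 * c)^2 = -(169/128) * (real s * c^2)" unfolding e1 by simp
  then have "-2 * real s * (13/16 * c)^2 = -(169/64) * L" unfolding e2 by simp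
  then have "exp (-2 * real s * (13/16 * c)^2) \<le> exp (-(2 * L + L/2))" using L0 by simp
  also have "\<dots> = 1 / (real t * (real t * sqrt (real t)))"
  proof -
    have "exp L * (exp L * exp (L/2)) = exp (2 * L + L/2)" by (simp add: mult_exp_exp)
    then have "exp (2 * L + L/2) = real t * (real t * sqrt (real t))" by (simp add: tL sqt)
    then show ?thesis by (simp add: exp_minus inverse_eq_divide)
  qed
  finally have T1: "exp (-2 * real s * (13/16 * c)^2) \<le> 1 / (real t * (real t * sqrt (real t)))" .
  have sc: "real s * c = sqrt (2 * real s * L)"
  proof -
    have "sqrt ((real s)^2 * (2 * L / real s)) = sqrt ((real s)^2) * sqrt (2 * L / real s)"
      by (rule real_sqrt_mult)
    then have "real s * c = sqrt ((real s)^2 * (2 * L / real s))" using s0 by (simp add: c L_def)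
    also have "(real s)^2 * (2 * L / real s) = 2 * real s * L" using s0 by (simp add: power2_eq_square)
    finally show ?thesis .
  qed
  have "(8 * L)^2 \<le> 2 * real s * L"
  proof -
    have "32 * L * L \<le> real s * L" using sL L0 by (intro mult_right_mono) auto
    then show ?thesis by (simp add: power2_eq_square algebra_simps)
  qed
  then have "8 * L \<le> sqrt (2 * real s * L)" by (rule real_le_rsqrt)
  then have "8 * L \<le> real s * c" using sc by simp
  then have "-2 * real s * (3/16 * c) \<le> -(3 * L)" by (simp add: mult.commute)
  then have "exp (-2 * real s * (3/16 * c)) \<le> exp (-(3 * L))" by simp
  also have "exp (-(3 * L)) = 1 / (real t)^3"
  proof -
    have "exp (3 * L) = (exp L)^3" by (metis exp_of_nat_mult of_nat_numeral)
    then show ?thesis by (simp add: exp_minus tL inverse_eq_divide)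
  qed
  finally have T2: "exp (-2 * real s * (3/16 * c)) \<le> 1 / (real t)^3" .
  show ?thesis using T1 T2 t17 by simp
qed

lemma card_as_sum: "finite T \<Longrightarrow> real (card {t\<in>T. P t}) = (\<Sum>t\<in>T. if P t then 1 else 0)"
  by (simp add: sum.If_cases Int_def)

context bandit begin

lemma arm_expect:
  fixes tb :: "nat \<Rightarrow> nat set \<Rightarrow> nat" and n i ist :: nat
  assumes tb: "\<And>t S. S \<noteq> {} \<Longrightarrow> tb t S \<in> S" and K2: "2 \<le> K"
    and i: "i < K" and ist: "ist < K" and d: "dist_var (\<nu> i) < dist_var (\<nu> ist)"
  shows "expectation (\<lambda>\<omega>. real (vv_counts K tb (\<lambda>j q. X j q \<omega>) n i))
     \<le> 8 * ln (real n) / (dist_var (\<nu> ist) - dist_var (\<nu> i))^2 + 1 + 5/2"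
proof -
  define v where "v = (\<lambda>j. dist_var (\<nu> j))"
  define \<delta> where "\<delta> = v ist - v i"
  have \<delta>: "0 < \<delta>" using d by (simp add: \<delta>_def v_def)
  define l where "l = max 1 (nat \<lceil>8 * ln (real n) / \<delta>^2\<rceil>)"
  have lnn: "0 \<le> ln (real n)" by (cases n) auto
  have l1: "1 \<le> l" by (simp add: l_def)
  have l_ge: "8 * ln (real n) / \<delta>^2 \<le> real l"
  proof -
    have "8 * ln (real n) / \<delta>^2 \<le> real (nat \<lceil>8 * ln (real n) / \<delta>^2\<rceil>)" by (rule real_nat_ceiling_ge)
    also have "\<dots> \<le> real l" unfolding l_def by simp
    finally show ?thesis .
  qed
  have l_le: "real l \<le> 8 * ln (real n) / \<delta>^2 + 1"
  proof -
    have a: "0 \<le> 8 * ln (real n) / \<delta>^2" using lnn by simp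
    have "real (nat \<lceil>8 * ln (real n) / \<delta>^2\<rceil>) \<le> 8 * ln (real n) / \<delta>^2 + 1"
    proof -
      have "0 \<le> \<lceil>8 * ln (real n) / \<delta>^2\<rceil>" using a by simp
      then have "real (nat \<lceil>8 * ln (real n) / \<delta>^2\<rceil>) = real_of_int \<lceil>8 * ln (real n) / \<delta>^2\<rceil>" by simp
      also have "\<dots> \<le> 8 * ln (real n) / \<delta>^2 + 1" by (rule of_int_ceiling_le_add_one)
      finally show ?thesis .
    qed
    then show ?thesis using a unfolding l_def of_nat_max by simp
  qed
  define A where "A = (\<lambda>t s. {\<omega>\<in>space M. v i + sqrt (2 * ln (real t) / real s) \<le> emp_var (\<lambda>j q. X j q \<omega>) i s})"
  define B where "B = (\<lambda>t s. {\<omega>\<in>space M. emp_var (\<lambda>j q. X j q \<omega>) ist s + sqrt (2 * ln (real t) / real s) \<le> v ist})"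
  have emeas: "(\<lambda>\<omega>. emp_var (\<lambda>j q. X j q \<omega>) j s) \<in> borel_measurable M" if "j < K" for j s
    unfolding emp_var_def emp_mean_def using Xmeas[OF that] by measurable
  have Am: "A t s \<in> sets M" for t s
    unfolding A_def using emeas[OF i, of s] by measurable
  have Bm: "B t s \<in> sets M" for t s
    unfolding B_def using emeas[OF ist, of s] by measurable
  define G where "G = (\<lambda>\<omega>. real l + (\<Sum>t\<in>{K..<n}. (\<Sum>s\<in>{1..t}. indicator (A t s) \<omega>) + (\<Sum>s\<in>{1..t}. indicator (B t s) \<omega>)))"
  have Gint: "integrable M G"
    unfolding G_def by (intro Bochner_Integration.integrable_add Bochner_Integration.integrable_sum) (use Am Bm in \<open>auto intro!: integrable_indicator simp: less_top[symmetric]\<close>)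
  have Gval: "integral\<^sup>L M G = real l + (\<Sum>t\<in>{K..<n}. (\<Sum>s\<in>{1..t}. prob (A t s)) + (\<Sum>s\<in>{1..t}. prob (B t s)))"
  proof -
    have intA: "integrable M (\<lambda>\<omega>. indicator (A t s) \<omega> :: real)" for t s
      using Am[of t s] by (auto intro!: integrable_indicator simp: less_top[symmetric])
    have intB: "integrable M (\<lambda>\<omega>. indicator (B t s) \<omega> :: real)" for t s
      using Bm[of t s] by (auto intro!: integrable_indicator simp: less_top[symmetric])
    have iA: "(\<integral>\<omega>. indicator (A t s) \<omega> \<partial>M) = prob (A t s)" for t s
    proof -
      have "A t s \<inter> space M = A t s" by (auto simp: A_def)
      then show ?thesis by simp
    qed
    have iB: "(\<integral>\<omega>. indicator (B t s) \<omega> \<partial>M) = prob (B t s)" for t s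
    proof -
      have "B t s \<inter> space M = B t s" by (auto simp: B_def)
      then show ?thesis by simp
    qed
    have AI: "A t s \<inter> space M = A t s" "B t s \<inter> space M = B t s" for t s by (auto simp: A_def B_def)
    show ?thesis unfolding G_def
      by (simp add: AI Bochner_Integration.integral_add Bochner_Integration.integral_sum intA intB iA iB prob_space)
  qed
  have pw: "real (vv_counts K tb (\<lambda>j q. X j q \<omega>) n i) \<le> G \<omega>" if \<omega>: "\<omega> \<in> space M" for \<omega>
  proof -
    let ?x = "\<lambda>j q. X j q \<omega>"
    let ?P = "\<lambda>t. arm K tb ?x t = i \<and> l \<le> vv_counts K tb ?x t i"
    have "real (vv_counts K tb ?x n i) \<le> real l + real (card {t\<in>{K..<n}. ?P t})"
      using count_bound[OF l1, of K tb ?x n i] by linarith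
    also have "real (card {t\<in>{K..<n}. ?P t}) = (\<Sum>t\<in>{K..<n}. if ?P t then 1 else 0)"
      by (rule card_as_sum) simp
    also have "\<dots> \<le> (\<Sum>t\<in>{K..<n}. (\<Sum>s\<in>{1..t}. indicator (A t s) \<omega>) + (\<Sum>s\<in>{1..t}. indicator (B t s) \<omega>))"
    proof (rule sum_mono)
      fix t assume t: "t \<in> {K..<n}"
      show "(if ?P t then 1 else 0 :: real) \<le> (\<Sum>s\<in>{1..t}. indicator (A t s) \<omega>) + (\<Sum>s\<in>{1..t}. indicator (B t s) \<omega>)"
      proof (cases "?P t")
        case True
        have "(\<exists>s\<in>{1..t}. v i + sqrt (2 * ln (real t) / real s) \<le> emp_var ?x i s)
            \<or> (\<exists>s\<in>{1..t}. emp_var ?x ist s + sqrt (2 * ln (real t) / real s) \<le> v ist)"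
        proof (rule key[where v=v and l=l and tb=tb and K=K and t=t and n=n and x="?x" and i=i and ist=ist, OF tb])
          show "0 < K" "K \<le> t" "t < n" using K2 t by auto
          show "arm K tb ?x t = i" "l \<le> vv_counts K tb ?x t i" using True by auto
          show "ist < K" by (rule ist)
          show "8 * ln (real n) / (v ist - v i)^2 \<le> real l" using l_ge by (simp add: \<delta>_def)
          show "v i < v ist" using \<delta> by (simp add: \<delta>_def)
        qed
        then show ?thesis
        proof
          assume "\<exists>s\<in>{1..t}. v i + sqrt (2 * ln (real t) / real s) \<le> emp_var ?x i s"
          then obtain s where s: "s \<in> {1..t}" "\<omega> \<in> A t s" using \<omega> by (auto simp: A_def)
          have "1 \<le> (\<Sum>s\<in>{1..t}. indicator (A t s) \<omega> :: real)"
            using member_le_sum[of s "{1..t}" "\<lambda>s. indicator (A t s) \<omega> :: real"] s by auto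
          moreover have "0 \<le> (\<Sum>s\<in>{1..t}. indicator (B t s) \<omega> :: real)" by (simp add: sum_nonneg)
          ultimately show ?thesis using True by simp
        next
          assume "\<exists>s\<in>{1..t}. emp_var ?x ist s + sqrt (2 * ln (real t) / real s) \<le> v ist"
          then obtain s where s: "s \<in> {1..t}" "\<omega> \<in> B t s" using \<omega> by (auto simp: B_def)
          have "1 \<le> (\<Sum>s\<in>{1..t}. indicator (B t s) \<omega> :: real)"
            using member_le_sum[of s "{1..t}" "\<lambda>s. indicator (B t s) \<omega> :: real"] s by auto
          moreover have "0 \<le> (\<Sum>s\<in>{1..t}. indicator (A t s) \<omega> :: real)" by (simp add: sum_nonneg)
          ultimately show ?thesis using True by simp
        qed
      next
        case False
        show ?thesis unfolding if_not_P[OF False] by (intro add_nonneg_nonneg sum_nonneg) simp_all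
      qed
    qed
    finally show ?thesis by (simp add: G_def)
  qed
  have EG: "expectation (\<lambda>\<omega>. real (vv_counts K tb (\<lambda>j q. X j q \<omega>) n i)) \<le> integral\<^sup>L M G"
  proof (cases "integrable M (\<lambda>\<omega>. real (vv_counts K tb (\<lambda>j q. X j q \<omega>) n i))")
    case True
    show ?thesis by (rule Bochner_Integration.integral_mono[OF True Gint pw])
  next
    case False
    have G0: "0 \<le> G \<omega>" if "\<omega> \<in> space M" for \<omega>
      using pw[OF that] by (meson of_nat_0_le_iff order.trans)
    have "0 \<le> integral\<^sup>L M G" by (rule Bochner_Integration.integral_nonneg) (use G0 in auto)
    then show ?thesis using False by (simp add: not_integrable_integral_eq)
  qed
  have stepA: "(\<Sum>s\<in>{1..t}. prob (A t s)) \<le> 1 / (real t)^3" if t: "2 \<le> t" for t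
  proof -
    have "(\<Sum>s\<in>{1..t}. prob (A t s)) \<le> (\<Sum>s\<in>{1..t}. 1 / (real t)^4)"
    proof (rule sum_mono)
      fix s assume s: "s \<in> {1..t}"
      have "0 \<le> sqrt (2 * ln (real t) / real s)" using t by simp
      from tail_up[OF i _ this, of s] s
      have "prob (A t s) \<le> exp (-2 * real s * (sqrt (2 * ln (real t) / real s))^2)"
        by (simp add: A_def v_def)
      also have "\<dots> = 1 / (real t)^4" using exp_ln_sq[of t s] s t by simp
      finally show "prob (A t s) \<le> 1 / (real t)^4" .
    qed
    also have "\<dots> = 1 / (real t)^3" using t by (simp add: power_def field_simps eval_nat_numeral)
    finally show ?thesis .
  qed
  have vb: "v ist \<le> 1/4" using var_bounds[OF ist] by (simp add: v_def)
  have stepB: "(\<Sum>s\<in>{1..t}. prob (B t s)) \<le> (if 17 \<le> t then 1 / (real t * sqrt (real t)) + 2 / (real t)^2 else 0)"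
    if t: "2 \<le> t" for t
  proof -
    define P where "P = (if 17 \<le> t then 1 / (real t * (real t * sqrt (real t))) + 2 / (real t)^3 else 0)"
    have "(\<Sum>s\<in>{1..t}. prob (B t s)) \<le> (\<Sum>s\<in>{1..t}. P)"
    proof (rule sum_mono)
      fix s assume s: "s \<in> {1..t}"
      define c where "c = sqrt (2 * ln (real t) / real s)"
      have c0: "0 \<le> c" using t unfolding c_def by simp
      show "prob (B t s) \<le> P"
      proof (cases "c \<le> v ist")
        case True
        have o: "17 \<le> t \<and> exp (-2 * real s * (13/16 * c)^2) + 2 * exp (-2 * real s * (3/16 * c))
           \<le> 1 / (real t * (real t * sqrt (real t))) + 2 / (real t)^3"
          using opt_real[OF t _ _ vb c_def True] s by auto
        have "prob (B t s) \<le> exp (-2 * real s * (13/16 * c)^2) + 2 * exp (-2 * real s * (3/16 * c))"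
          using tail_down[OF ist _ c0, of s] s by (simp add: B_def c_def v_def)
        then show ?thesis using o by (simp add: P_def)
      next
        case False
        have "B t s = {}"
        proof -
          have "\<not> (emp_var (\<lambda>j q. X j q \<omega>) ist s + c \<le> v ist)" for \<omega>
            using emp_var_nonneg[of "\<lambda>j q. X j q \<omega>" ist s] False by linarith
          then show ?thesis unfolding B_def c_def by auto
        qed
        then show ?thesis by (simp add: P_def)
      qed
    qed
    also have "\<dots> = real t * P" by simp
    also have "\<dots> = (if 17 \<le> t then 1 / (real t * sqrt (real t)) + 2 / (real t)^2 else 0)"
      using t by (simp add: P_def field_simps power2_eq_square power3_eq_cube)
    finally show ?thesis .
  qed
  have sumT: "(\<Sum>t\<in>{K..<n}. (\<Sum>s\<in>{1..t}. prob (A t s)) + (\<Sum>s\<in>{1..t}. prob (B t s))) \<le> 5/2"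
  proof (cases "K \<le> n")
    case True
    have "(\<Sum>t\<in>{K..<n}. (\<Sum>s\<in>{1..t}. prob (A t s)) + (\<Sum>s\<in>{1..t}. prob (B t s)))
        \<le> (\<Sum>t\<in>{K..<n}. Fb t - Fb (Suc t))"
    proof (rule sum_mono)
      fix t assume "t \<in> {K..<n}"
      then have t: "2 \<le> t" using K2 by auto
      show "(\<Sum>s\<in>{1..t}. prob (A t s)) + (\<Sum>s\<in>{1..t}. prob (B t s)) \<le> Fb t - Fb (Suc t)"
        using stepA[OF t] stepB[OF t] R_step[OF t] by linarith
    qed
    also have "\<dots> = Fb K - Fb n" using True by (rule R_tel)
    also have "\<dots> \<le> 5/2" using Fb_bounds[OF K2] Fb_bounds[of n] True K2 by auto
    finally show ?thesis .
  next
    case False then show ?thesis by simp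
  qed
  have "expectation (\<lambda>\<omega>. real (vv_counts K tb (\<lambda>j q. X j q \<omega>) n i)) \<le> real l + 5/2"
    using EG Gval sumT by linarith
  also have "\<dots> \<le> 8 * ln (real n) / \<delta>^2 + 1 + 5/2" using l_le by linarith
  finally show ?thesis by (simp add: \<delta>_def v_def)
qed

end

theorem theorem1:
  fixes M :: "'a measure" and K n :: nat
    and \<nu> :: "nat \<Rightarrow> real measure"
    and X :: "nat \<Rightarrow> nat \<Rightarrow> 'a \<Rightarrow> real"
    and tb :: "nat \<Rightarrow> nat set \<Rightarrow> nat"
  assumes "prob_space M"
    and "K \<ge> 2"
    and "\<And>i. i < K \<Longrightarrow> prob_space (\<nu> i)"
    and "\<And>i. i < K \<Longrightarrow> sets (\<nu> i) = sets borel"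
    and "\<And>i. i < K \<Longrightarrow> measure (\<nu> i) {0..1} = 1"
    and "prob_space.indep_vars M (\<lambda>_. borel) (\<lambda>(i, q). X i q) ({..<K} \<times> UNIV)"
    and "\<And>i q. i < K \<Longrightarrow> distr M borel (X i q) = \<nu> i"
    and "\<And>t S. S \<noteq> {} \<Longrightarrow> tb t S \<in> S"
    and "\<exists>i<K. \<forall>j<K. j \<noteq> i \<longrightarrow> dist_var (\<nu> j) < dist_var (\<nu> i)"
  shows "(let \<sigma>s = Max ((\<lambda>i. dist_var (\<nu> i)) ` {..<K});
             \<delta> = (\<lambda>i. \<sigma>s - dist_var (\<nu> i));
             subopt = {i. i < K \<and> dist_var (\<nu> i) < \<sigma>s}
         in (\<Sum>i<K. (\<integral>\<omega>. real (vv_counts K tb (\<lambda>j q. X j q \<omega>) n i) \<partial>M) * \<delta> i)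
            \<le> 8 * (\<Sum>i\<in>subopt. ln (real n) / \<delta> i) + (1 + pi^2 / 3) * (\<Sum>i\<in>subopt. \<delta> i))"
proof -
  have "bandit M K \<nu> X" unfolding bandit_def bandit_axioms_def using assms by auto
  then interpret B: bandit M K \<nu> X .
  define v where "v = (\<lambda>i. dist_var (\<nu> i))"
  define \<sigma>s where "\<sigma>s = Max (v ` {..<K})"
  define E where "E = (\<lambda>i. (\<integral>\<omega>. real (vv_counts K tb (\<lambda>j q. X j q \<omega>) n i) \<partial>M))"
  define S where "S = {i. i < K \<and> v i < \<sigma>s}"
  have ne: "v ` {..<K} \<noteq> {}" using assms(2) by (auto simp: lessThan_empty_iff)
  obtain ist where ist: "ist < K" "v ist = \<sigma>s"
    using Max_in[OF _ ne] unfolding \<sigma>s_def by auto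
  have vle: "v i \<le> \<sigma>s" if "i < K" for i unfolding \<sigma>s_def using that by (intro Max_ge) auto
  have pi2: "5/2 \<le> pi^2 / 3"
  proof -
    have "3 * 3 \<le> pi * pi" using pi_gt3 by (intro mult_mono) auto
    then show ?thesis by (simp add: power2_eq_square)
  qed
  have "(\<Sum>i<K. E i * (\<sigma>s - v i)) = (\<Sum>i\<in>S. E i * (\<sigma>s - v i))"
  proof (rule sum.mono_neutral_right)
    show "\<forall>i\<in>{..<K} - S. E i * (\<sigma>s - v i) = 0"
      using vle by (auto simp: S_def not_less intro: antisym)
  qed (auto simp: S_def)
  also have "\<dots> \<le> (\<Sum>i\<in>S. 8 * (ln (real n) / (\<sigma>s - v i)) + (1 + pi^2/3) * (\<sigma>s - v i))"
  proof (rule sum_mono)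
    fix i assume "i \<in> S"
    then have i: "i < K" and d: "v i < \<sigma>s" by (auto simp: S_def)
    define \<delta> where "\<delta> = \<sigma>s - v i"
    have \<delta>: "0 < \<delta>" using d by (simp add: \<delta>_def)
    have "E i \<le> 8 * ln (real n) / \<delta>^2 + 1 + 5/2"
      using B.arm_expect[OF assms(8) assms(2) i ist(1)] d ist(2)
      by (simp add: E_def \<delta>_def v_def)
    then have "E i * \<delta> \<le> (8 * ln (real n) / \<delta>^2 + 1 + 5/2) * \<delta>"
      using \<delta> by (intro mult_right_mono) auto
    also have "\<dots> = 8 * (ln (real n) / \<delta>) + 7/2 * \<delta>"
      using \<delta> by (simp add: field_simps power2_eq_square)
    also have "\<dots> \<le> 8 * (ln (real n) / \<delta>) + (1 + pi^2/3) * \<delta>"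
      using \<delta> pi2 by (intro add_left_mono mult_right_mono) auto
    finally show "E i * (\<sigma>s - v i) \<le> 8 * (ln (real n) / (\<sigma>s - v i)) + (1 + pi^2/3) * (\<sigma>s - v i)"
      by (simp add: \<delta>_def)
  qed
  also have "\<dots> = 8 * (\<Sum>i\<in>S. ln (real n) / (\<sigma>s - v i)) + (1 + pi^2/3) * (\<Sum>i\<in>S. \<sigma>s - v i)"
    by (simp add: sum.distrib sum_distrib_left)
  finally show ?thesis
    unfolding Let_def by (simp add: E_def S_def v_def \<sigma>s_def)
qed

end
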